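(* Let $(\mathcal R,\le,r)$ be a closed triple satisfying A.1–A.4 with $(\mathcal R,\le)$ a partial order with top element $\mathbb A$. Let $\mathcal C\subseteq\mathcal R$ be a filter on $(\mathcal R,\le)$ with basic Tukey reductions and $\mathcal V$ a nonprincipal ultrafilter on $\omega$ with $\mathcal V\le_T\mathcal C$. Then there are a front $\mathcal F$ on $\mathcal C$ and a function $f:\mathcal F\to\omega$ such that for every $Y\in\mathcal V$ there is $X\in\mathcal C$ with $f[\mathcal F|X]\subseteq Y$. Moreover, if $\mathcal C\restriction\mathcal F$ is a base for an ultrafilter on $\mathcal F$, then $\mathcal V=f(\langle\mathcal C\restriction\mathcal F\rangle)$.
   Context: Axioms A.1–A.4, $\le_{\rm fin}$, $\sqsubseteq$, depth, filters and "basic Tukey reductions" are as defined in the context of the p-point Tukey theorem: $r_n(A)$ are approximations, $\mathcal{AR}=\bigcup_n\{r_n(A)\}$; A.1: $r_0(A)=\emptyset$, distinct $A,B$ differ at some $r_n$, $r_n(A)=r_m(B)\Rightarrow n=m$ and equal earlier approximations; A.2: quasi-order $\le_{\rm fin}$ on $\mathcal{AR}$ with finite down-sets, $A\le B\iff\forall n\exists m\ r_n(A)\le_{\rm fin}r_m(B)$, and $a\sqsubset b\le_{\rm fin}c\Rightarrow\exists d\sqsubset c\ a\le_{\rm fin}d$; A.3 and A.4 as usual (nonemptiness/refinement of $[a,A]$ and one-step pigeonhole on $r_{|a|+1}[a,A]$). $\mathcal C$ has basic Tukey reductions if every monotone cofinal $f:\mathcal C\to\mathcal V$ ($\mathcal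 V$ nonprincipal ultrafilter on $\omega$) agrees on $\{Y\in\mathcal C:Y\le X\}$, for some $X\in\mathcal C$, with a monotone continuous $\tilde f:\mathcal R\to\mathcal P(\omega)$ given by $\tilde f(Y)=\bigcup_k\hat f(r_k(Y))$ for some $\hat f:\mathcal{AR}\to[\omega]^{<\omega}$ that is end-extension preserving along $\sqsubseteq$, monotone for $\le_{\rm fin}$, and satisfies $\hat f(s)\subseteq k$ whenever $\mathrm{depth}_{\mathbb A}(s)\le k$. Tukey: $\mathcal V\le_T\mathcal C$ means there is $g:\mathcal C\to\mathcal V$ mapping every cofinal subset of $(\mathcal C,\ge)$ onto a cofinal subset of $(\mathcal V,\supseteq)$. A front on $\mathcal C$ is $\mathcal F\subseteq\mathcal{AR}$ such that every $C\in\mathcal C$ has some $s\in\mathcal F$ with $s\sqsubseteq C$ (i.e. $s=r_n(C)$ for some $n$) and no member of $\mathcal F$ is a proper initial segment of another. $\mathcal F|X=\{a\in\mathcal F:a\le_{\rm fin}X\}$, $\mathcal C\restriction\mathcal F=\{\mathcal F|X:X\in\mathcal C\}$, $\langle\mathcal C\restriction\mathcal F\rangle$ the filter it generates, and $f(\mathcal U)=\{Z\subseteq\omega:f^{-1}[Z]\in\mathcal U\}$. *)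

theory Defs
  imports Main "HOL-Library.Extended_Nat"
begin

text \<open>A triple (R, le, r): R is a set of points of type 'x, le is the
  quasi-order on R, r A n is the n-th approximation of A (of type 'a).
  lefin is the finitization order on the approximations.\<close>

definition AR :: "'x set \<Rightarrow> ('x \<Rightarrow> nat \<Rightarrow> 'a) \<Rightarrow> 'a set" where
  "AR R r = {r A n | A n. A \<in> R}"

definition ARn :: "'x set \<Rightarrow> ('x \<Rightarrow> nat \<Rightarrow> 'a) \<Rightarrow> nat \<Rightarrow> 'a set" where
  "ARn R r n = {r A n | A. A \<in> R}"

text \<open>length |a| of an approximation (well defined by A.1)\<close>
definition alen :: "'x set \<Rightarrow> ('x \<Rightarrow> nat \<Rightarrow> 'a) \<Rightarrow> 'a \<Rightarrow> nat" where
  "alen R r a = (THE n. \<exists>A\<in>R. a = r A n)"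

definition sqle :: "'x set \<Rightarrow> ('x \<Rightarrow> nat \<Rightarrow> 'a) \<Rightarrow> 'a \<Rightarrow> 'a \<Rightarrow> bool" where
  "sqle R r a b = (\<exists>A\<in>R. \<exists>n m. n \<le> m \<and> a = r A n \<and> b = r A m)"

definition sqlt :: "'x set \<Rightarrow> ('x \<Rightarrow> nat \<Rightarrow> 'a) \<Rightarrow> 'a \<Rightarrow> 'a \<Rightarrow> bool" where
  "sqlt R r a b = (\<exists>A\<in>R. \<exists>n m. n < m \<and> a = r A n \<and> b = r A m)"

definition depth :: "('x \<Rightarrow> nat \<Rightarrow> 'a) \<Rightarrow> ('a \<Rightarrow> 'a \<Rightarrow> bool) \<Rightarrow> 'x \<Rightarrow> 'a \<Rightarrow> enat" where
  "depth r lefin B a =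
     (if \<exists>n. lefin a (r B n) then enat (LEAST n. lefin a (r B n)) else \<infinity>)"

definition intv :: "'x set \<Rightarrow> ('x \<Rightarrow> 'x \<Rightarrow> bool) \<Rightarrow> ('x \<Rightarrow> nat \<Rightarrow> 'a) \<Rightarrow> 'a \<Rightarrow> 'x \<Rightarrow> 'x set" where
  "intv R le r a B = {A \<in> R. le A B \<and> (\<exists>n. r A n = a)}"

text \<open>closedness of R as a subspace of AR^\<omega>\<close>
definition closed_triple :: "'x set \<Rightarrow> ('x \<Rightarrow> nat \<Rightarrow> 'a) \<Rightarrow> bool" where
  "closed_triple R r =
    (\<forall>s :: nat \<Rightarrow> 'a. (\<forall>n. \<exists>A\<in>R. \<forall>i\<le>n. r A i = s i) \<longrightarrow> (\<exists>A\<in>R. \<forall>i. r A i = s i))"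

definition axA1 :: "'x set \<Rightarrow> ('x \<Rightarrow> nat \<Rightarrow> 'a) \<Rightarrow> bool" where
  "axA1 R r =
    ((\<forall>A\<in>R. \<forall>B\<in>R. r A 0 = r B 0) \<and>
     (\<forall>A\<in>R. \<forall>B\<in>R. A \<noteq> B \<longrightarrow> (\<exists>n. r A n \<noteq> r B n)) \<and>
     (\<forall>A\<in>R. \<forall>B\<in>R. \<forall>n m. r A n = r B m \<longrightarrow> n = m \<and> (\<forall>i<n. r A i = r B i)))"

definition axA2 :: "'x set \<Rightarrow> ('x \<Rightarrow> 'x \<Rightarrow> bool) \<Rightarrow> ('x \<Rightarrow> nat \<Rightarrow> 'a) \<Rightarrow> ('a \<Rightarrow> 'a \<Rightarrow> bool) \<Rightarrow> bool" where
  "axA2 R le r lefin =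
    ((\<forall>a\<in>AR R r. lefin a a) \<and>
     (\<forall>a\<in>AR R r. \<forall>b\<in>AR R r. \<forall>c\<in>AR R r. lefin a b \<and> lefin b c \<longrightarrow> lefin a c) \<and>
     (\<forall>b\<in>AR R r. finite {a \<in> AR R r. lefin a b}) \<and>
     (\<forall>A\<in>R. \<forall>B\<in>R. le A B \<longleftrightarrow> (\<forall>n. \<exists>m. lefin (r A n) (r B m))) \<and>
     (\<forall>a\<in>AR R r. \<forall>b\<in>AR R r. \<forall>c\<in>AR R r. sqlt R r a b \<and> lefin b c \<longrightarrow>
        (\<exists>d\<in>AR R r. sqlt R r d c \<and> lefin a d)))"

definition axA3 :: "'x set \<Rightarrow> ('x \<Rightarrow> 'x \<Rightarrow> bool) \<Rightarrow> ('x \<Rightarrow> nat \<Rightarrow> 'a) \<Rightarrow> ('a \<Rightarrow> 'a \<Rightarrow> bool) \<Rightarrow> bool" where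
  "axA3 R le r lefin =
    ((\<forall>a\<in>AR R r. \<forall>B\<in>R. \<forall>d. depth r lefin B a = enat d \<longrightarrow>
        (\<forall>A\<in>intv R le r (r B d) B. intv R le r a A \<noteq> {})) \<and>
     (\<forall>a\<in>AR R r. \<forall>A\<in>R. \<forall>B\<in>R. \<forall>d. le A B \<and> intv R le r a A \<noteq> {} \<and> depth r lefin B a = enat d \<longrightarrow>
        (\<exists>A'\<in>intv R le r (r B d) B. intv R le r a A' \<noteq> {} \<and> intv R le r a A' \<subseteq> intv R le r a A)))"

definition axA4 :: "'x set \<Rightarrow> ('x \<Rightarrow> 'x \<Rightarrow> bool) \<Rightarrow> ('x \<Rightarrow> nat \<Rightarrow> 'a) \<Rightarrow> ('a \<Rightarrow> 'a \<Rightarrow> bool) \<Rightarrow> bool" where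
  "axA4 R le r lefin =
    (\<forall>a\<in>AR R r. \<forall>B\<in>R. \<forall>d. depth r lefin B a = enat d \<longrightarrow>
       (\<forall>Q. Q \<subseteq> ARn R r (alen R r a + 1) \<longrightarrow>
          (\<exists>A\<in>intv R le r (r B d) B.
             (\<lambda>C. r C (alen R r a + 1)) ` intv R le r a A \<subseteq> Q \<or>
             (\<lambda>C. r C (alen R r a + 1)) ` intv R le r a A \<subseteq> - Q)))"

definition partial_order_top :: "'x set \<Rightarrow> ('x \<Rightarrow> 'x \<Rightarrow> bool) \<Rightarrow> 'x \<Rightarrow> bool" where
  "partial_order_top R le T =
    ((\<forall>A\<in>R. le A A) \<and> (\<forall>A\<in>R. \<forall>B\<in>R. le A B \<and> le B A \<longrightarrow> A = B) \<and>
     (\<forall>A\<in>R. \<forall>B\<in>R. \<forall>C\<in>R. le A B \<and> le B C \<longrightarrow> le A C) \<and>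
     T \<in> R \<and> (\<forall>A\<in>R. le A T))"

definition poset_filter :: "'x set \<Rightarrow> ('x \<Rightarrow> 'x \<Rightarrow> bool) \<Rightarrow> 'x set \<Rightarrow> bool" where
  "poset_filter R le C =
    (C \<subseteq> R \<and> C \<noteq> {} \<and>
     (\<forall>X\<in>C. \<forall>Y\<in>R. le X Y \<longrightarrow> Y \<in> C) \<and>
     (\<forall>X\<in>C. \<forall>Y\<in>C. \<exists>Z\<in>C. le Z X \<and> le Z Y))"

definition ultrafilter_on :: "'b set \<Rightarrow> 'b set set \<Rightarrow> bool" where
  "ultrafilter_on S U =
    (U \<subseteq> Pow S \<and> S \<in> U \<and> {} \<notin> U \<and>
     (\<forall>Z\<in>U. \<forall>W. Z \<subseteq> W \<and> W \<subseteq> S \<longrightarrow> W \<in> U) \<and>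
     (\<forall>Z\<in>U. \<forall>W\<in>U. Z \<inter> W \<in> U) \<and>
     (\<forall>Z. Z \<subseteq> S \<longrightarrow> Z \<in> U \<or> S - Z \<in> U))"

definition nonprincipal_ultrafilter :: "nat set set \<Rightarrow> bool" where
  "nonprincipal_ultrafilter V = (ultrafilter_on UNIV V \<and> (\<forall>n. {n} \<notin> V))"

definition cofinal_down :: "('x \<Rightarrow> 'x \<Rightarrow> bool) \<Rightarrow> 'x set \<Rightarrow> 'x set \<Rightarrow> bool" where
  "cofinal_down le C D = (D \<subseteq> C \<and> (\<forall>X\<in>C. \<exists>Y\<in>D. le Y X))"

definition cofinal_sup :: "nat set set \<Rightarrow> nat set set \<Rightarrow> bool" where
  "cofinal_sup V W = (W \<subseteq> V \<and> (\<forall>Z\<in>V. \<exists>Y\<in>W. Y \<subseteq> Z))"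

definition cofinal_map :: "('x \<Rightarrow> 'x \<Rightarrow> bool) \<Rightarrow> 'x set \<Rightarrow> nat set set \<Rightarrow> ('x \<Rightarrow> nat set) \<Rightarrow> bool" where
  "cofinal_map le C V g =
    ((\<forall>X\<in>C. g X \<in> V) \<and> (\<forall>D. cofinal_down le C D \<longrightarrow> cofinal_sup V (g ` D)))"

definition tukey_le :: "nat set set \<Rightarrow> ('x \<Rightarrow> 'x \<Rightarrow> bool) \<Rightarrow> 'x set \<Rightarrow> bool" where
  "tukey_le V le C = (\<exists>g. cofinal_map le C V g)"

definition fin_sqle :: "nat set \<Rightarrow> nat set \<Rightarrow> bool" where
  "fin_sqle s t = (s \<subseteq> t \<and> (\<forall>x\<in>s. \<forall>y\<in>t - s. x < y))"

definition basic_tukey_reductions ::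
  "'x set \<Rightarrow> ('x \<Rightarrow> 'x \<Rightarrow> bool) \<Rightarrow> ('x \<Rightarrow> nat \<Rightarrow> 'a) \<Rightarrow> ('a \<Rightarrow> 'a \<Rightarrow> bool) \<Rightarrow> 'x \<Rightarrow> 'x set \<Rightarrow> bool" where
  "basic_tukey_reductions R le r lefin T C =
    (\<forall>V f. nonprincipal_ultrafilter V \<and> cofinal_map le C V f \<and>
           (\<forall>X\<in>C. \<forall>Y\<in>C. le X Y \<longrightarrow> f X \<subseteq> f Y) \<longrightarrow>
      (\<exists>X\<in>C. \<exists>fh :: 'a \<Rightarrow> nat set.
         (\<forall>s\<in>AR R r. finite (fh s)) \<and>
         (\<forall>s\<in>AR R r. \<forall>t\<in>AR R r. sqle R r s t \<longrightarrow> fin_sqle (fh s) (fh t)) \<and>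
         (\<forall>s\<in>AR R r. \<forall>t\<in>AR R r. lefin s t \<longrightarrow> fh s \<subseteq> fh t) \<and>
         (\<forall>s\<in>AR R r. \<forall>k. depth r lefin T s \<le> enat k \<longrightarrow> fh s \<subseteq> {..<k}) \<and>
         (\<forall>Y\<in>R. \<forall>Z\<in>R. le Y Z \<longrightarrow> (\<Union>k. fh (r Y k)) \<subseteq> (\<Union>k. fh (r Z k))) \<and>
         (\<forall>Y\<in>C. le Y X \<longrightarrow> f Y = (\<Union>k. fh (r Y k)))))"

definition front_on :: "'x set \<Rightarrow> ('x \<Rightarrow> nat \<Rightarrow> 'a) \<Rightarrow> 'x set \<Rightarrow> 'a set \<Rightarrow> bool" where
  "front_on R r C F =
    (F \<subseteq> AR R r \<and> (\<forall>X\<in>C. \<exists>n. r X n \<in> F) \<and>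
     (\<forall>a\<in>F. \<forall>b\<in>F. \<not> sqlt R r a b))"

definition lefinR :: "('x \<Rightarrow> nat \<Rightarrow> 'a) \<Rightarrow> ('a \<Rightarrow> 'a \<Rightarrow> bool) \<Rightarrow> 'a \<Rightarrow> 'x \<Rightarrow> bool" where
  "lefinR r lefin a X = (\<exists>n. lefin a (r X n))"

definition restr :: "('x \<Rightarrow> nat \<Rightarrow> 'a) \<Rightarrow> ('a \<Rightarrow> 'a \<Rightarrow> bool) \<Rightarrow> 'a set \<Rightarrow> 'x \<Rightarrow> 'a set" where
  "restr r lefin F X = {a \<in> F. lefinR r lefin a X}"

definition gen_filter :: "('x \<Rightarrow> nat \<Rightarrow> 'a) \<Rightarrow> ('a \<Rightarrow> 'a \<Rightarrow> bool) \<Rightarrow> 'x set \<Rightarrow> 'a set \<Rightarrow> 'a set set" where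
  "gen_filter r lefin C F = {Z. Z \<subseteq> F \<and> (\<exists>X\<in>C. restr r lefin F X \<subseteq> Z)}"

definition image_filter :: "'a set \<Rightarrow> ('a \<Rightarrow> nat) \<Rightarrow> 'a set set \<Rightarrow> nat set set" where
  "image_filter F f U = {Z. {a \<in> F. f a \<in> Z} \<in> U}"

end

theory Submission
  imports Defs
begin

theorem mainTheorem8:
  fixes R :: "'x set" and le :: "'x \<Rightarrow> 'x \<Rightarrow> bool" and r :: "'x \<Rightarrow> nat \<Rightarrow> 'a"
    and lefin :: "'a \<Rightarrow> 'a \<Rightarrow> bool" and T :: 'x and C :: "'x set" and V :: "nat set set"
  assumes "closed_triple R r"
    and "axA1 R r" and "axA2 R le r lefin" and "axA3 R le r lefin" and "axA4 R le r lefin"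
    and "partial_order_top R le T"
    and "poset_filter R le C"
    and "basic_tukey_reductions R le r lefin T C"
    and "nonprincipal_ultrafilter V"
    and "tukey_le V le C"
  shows "\<exists>F (f :: 'a \<Rightarrow> nat). front_on R r C F \<and>
           (\<forall>Y\<in>V. \<exists>X\<in>C. f ` restr r lefin F X \<subseteq> Y) \<and>
           (ultrafilter_on F (gen_filter r lefin C F) \<longrightarrow>
              V = image_filter F f (gen_filter r lefin C F))"
proof -
  have A1: "\<forall>A\<in>R. \<forall>B\<in>R. \<forall>n m. r A n = r B m \<longrightarrow> n = m \<and> (\<forall>i<n. r A i = r B i)"
    using assms(2) unfolding axA1_def by blast
  have lefmono: True by simp
  have refl: "\<And>A. A \<in> R \<Longrightarrow> le A A" and trans: "\<And>A B D. A \<in> R \<Longrightarrow> B \<in> R \<Longrightarrow> D \<in> R \<Longrightarrow> le A B \<Longrightarrow> le B D \<Longrightarrow> le A D"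
    using assms(6) unfolding partial_order_top_def by blast+
  have CR: "C \<subseteq> R" and Cdir: "\<And>X Y. X \<in> C \<Longrightarrow> Y \<in> C \<Longrightarrow> \<exists>Z\<in>C. le Z X \<and> le Z Y"
    using assms(7) unfolding poset_filter_def by blast+
  have Vuf: "ultrafilter_on UNIV V" using assms(9) unfolding nonprincipal_ultrafilter_def by blast
  have Vup: "\<And>Z W. Z \<in> V \<Longrightarrow> Z \<subseteq> W \<Longrightarrow> W \<in> V" and Vempty: "{} \<notin> V"
    and Vint: "\<And>Z W. Z \<in> V \<Longrightarrow> W \<in> V \<Longrightarrow> Z \<inter> W \<in> V"
    and Vcomp: "\<And>Z. Z \<notin> V \<Longrightarrow> UNIV - Z \<in> V"
    using Vuf unfolding ultrafilter_on_def by blast+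
  obtain g where g: "cofinal_map le C V g" using assms(10) unfolding tukey_le_def by blast
  have gV: "\<And>X. X \<in> C \<Longrightarrow> g X \<in> V" using g unfolding cofinal_map_def by blast
  have gP: "\<exists>X\<in>C. \<forall>Y\<in>C. le Y X \<longrightarrow> g Y \<subseteq> Z" if Z: "Z \<in> V" for Z
  proof (rule ccontr)
    assume na: "\<not> ?thesis"
    let ?D = "{Y\<in>C. \<not> g Y \<subseteq> Z}"
    have "cofinal_down le C ?D" using na unfolding cofinal_down_def by blast
    then have "cofinal_sup V (g ` ?D)" using g unfolding cofinal_map_def by blast
    then show False using Z unfolding cofinal_sup_def by blast
  qed
  define f' where "f' X = \<Union>{g Y | Y. Y \<in> C \<and> le Y X}" for X
  have f'V: "f' X \<in> V" if "X \<in> C" for X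
  proof -
    have "le X X" using refl that CR by blast
    then have "g X \<subseteq> f' X" unfolding f'_def using that by blast
    then show ?thesis using Vup gV that by blast
  qed
  have f'P: "\<exists>X\<in>C. \<forall>Y\<in>C. le Y X \<longrightarrow> f' Y \<subseteq> Z" if Z: "Z \<in> V" for Z
  proof -
    obtain X where X: "X \<in> C" "\<forall>Y\<in>C. le Y X \<longrightarrow> g Y \<subseteq> Z" using gP Z by blast
    have "\<forall>Y\<in>C. le Y X \<longrightarrow> f' Y \<subseteq> Z"
    proof (intro ballI impI)
      fix Y assume Y: "Y \<in> C" "le Y X"
      show "f' Y \<subseteq> Z" unfolding f'_def
      proof
        fix x assume "x \<in> \<Union>{g W | W. W \<in> C \<and> le W Y}"
        then obtain W where W: "W \<in> C" "le W Y" "x \<in> g W" by blast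
        have "le W X" using trans[of W Y X] W Y X CR by blast
        then show "x \<in> Z" using X W by blast
      qed
    qed
    then show ?thesis using X by blast
  qed
  have f'cof: "cofinal_map le C V f'"
    unfolding cofinal_map_def
  proof (intro conjI allI impI ballI)
    fix X assume "X \<in> C" then show "f' X \<in> V" by (rule f'V)
  next
    fix D assume D: "cofinal_down le C D"
    show "cofinal_sup V (f' ` D)" unfolding cofinal_sup_def
    proof (intro conjI ballI)
      show "f' ` D \<subseteq> V" using D f'V unfolding cofinal_down_def by blast
    next
      fix Z assume "Z \<in> V"
      then obtain X where X: "X \<in> C" "\<forall>Y\<in>C. le Y X \<longrightarrow> f' Y \<subseteq> Z" using f'P by blast
      then obtain Y where "Y \<in> D" "le Y X" using D unfolding cofinal_down_def by blast
      then show "\<exists>Y\<in>f' ` D. Y \<subseteq> Z" using X D unfolding cofinal_down_def by blast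
    qed
  qed
  have f'mono: "\<forall>X\<in>C. \<forall>Y\<in>C. le X Y \<longrightarrow> f' X \<subseteq> f' Y"
  proof (intro ballI impI)
    fix X Y assume XY: "X \<in> C" "Y \<in> C" "le X Y"
    show "f' X \<subseteq> f' Y" unfolding f'_def
    proof
      fix x assume "x \<in> \<Union>{g W | W. W \<in> C \<and> le W X}"
      then obtain W where W: "W \<in> C" "le W X" "x \<in> g W" by blast
      have "le W Y" using trans[of W X Y] W XY CR by blast
      then show "x \<in> \<Union>{g W | W. W \<in> C \<and> le W Y}" using W by blast
    qed
  qed
  obtain X0 fh where X0: "X0 \<in> C"
    and fhlef: "\<forall>s\<in>AR R r. \<forall>t\<in>AR R r. lefin s t \<longrightarrow> fh s \<subseteq> fh t"
    and fhmono: "\<forall>Y\<in>R. \<forall>Z\<in>R. le Y Z \<longrightarrow> (\<Union>k. fh (r Y k)) \<subseteq> (\<Union>k. fh (r Z k))"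
    and fheq: "\<forall>Y\<in>C. le Y X0 \<longrightarrow> f' Y = (\<Union>k. fh (r Y k))"
  proof -
    have "nonprincipal_ultrafilter V \<and> cofinal_map le C V f' \<and> (\<forall>X\<in>C. \<forall>Y\<in>C. le X Y \<longrightarrow> f' X \<subseteq> f' Y)"
      using assms(9) f'cof f'mono by blast
    then have "\<exists>X\<in>C. \<exists>fh :: 'a \<Rightarrow> nat set.
         (\<forall>s\<in>AR R r. finite (fh s)) \<and>
         (\<forall>s\<in>AR R r. \<forall>t\<in>AR R r. sqle R r s t \<longrightarrow> fin_sqle (fh s) (fh t)) \<and>
         (\<forall>s\<in>AR R r. \<forall>t\<in>AR R r. lefin s t \<longrightarrow> fh s \<subseteq> fh t) \<and>
         (\<forall>s\<in>AR R r. \<forall>k. depth r lefin T s \<le> enat k \<longrightarrow> fh s \<subseteq> {..<k}) \<and>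
         (\<forall>Y\<in>R. \<forall>Z\<in>R. le Y Z \<longrightarrow> (\<Union>k. fh (r Y k)) \<subseteq> (\<Union>k. fh (r Z k))) \<and>
         (\<forall>Y\<in>C. le Y X \<longrightarrow> f' Y = (\<Union>k. fh (r Y k)))"
      by (rule assms(8)[unfolded basic_tukey_reductions_def, rule_format])
    then show ?thesis by - (elim bexE exE conjE, rule that, assumption+)
  qed
  have ARI: "\<And>A n. A \<in> R \<Longrightarrow> r A n \<in> AR R r" unfolding AR_def by blast
  define F where "F = {s \<in> AR R r. fh s \<noteq> {} \<and> (\<forall>A\<in>R. \<forall>n. s = r A n \<longrightarrow> (\<forall>i<n. fh (r A i) = {}))}"
  define f where "f s = (LEAST x. x \<in> fh s)" for s
  have front: "front_on R r C F" unfolding front_on_def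
  proof (intro conjI ballI)
    show "F \<subseteq> AR R r" unfolding F_def by blast
  next
    fix X assume X: "X \<in> C"
    obtain Z where Z: "Z \<in> C" "le Z X" "le Z X0" using Cdir X X0 by blast
    have "f' Z = (\<Union>k. fh (r Z k))" using fheq Z by blast
    moreover have "f' Z \<noteq> {}" using f'V Z Vempty by metis
    ultimately have "(\<Union>k. fh (r Z k)) \<noteq> {}" by simp
    moreover have "(\<Union>k. fh (r Z k)) \<subseteq> (\<Union>k. fh (r X k))" using fhmono Z X CR by blast
    ultimately have ex: "\<exists>k. fh (r X k) \<noteq> {}" by blast
    define n where "n = (LEAST k. fh (r X k) \<noteq> {})"
    have n1: "fh (r X n) \<noteq> {}" unfolding n_def using ex by (rule LeastI_ex)
    have n2: "\<And>i. i < n \<Longrightarrow> fh (r X i) = {}" unfolding n_def using not_less_Least by blast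
    have "r X n \<in> F" unfolding F_def
    proof (intro CollectI conjI ballI allI impI)
      show "r X n \<in> AR R r" using ARI X CR by blast
      show "fh (r X n) \<noteq> {}" by (rule n1)
    next
      fix A m i assume A: "A \<in> R" "r X n = r A m" "i < m"
      then have "n = m \<and> (\<forall>i<n. r X i = r A i)" using A1 X CR by blast
      then show "fh (r A i) = {}" using n2 A by metis
    qed
    then show "\<exists>n. r X n \<in> F" by blast
  next
    fix a b assume ab: "a \<in> F" "b \<in> F"
    show "\<not> sqlt R r a b"
    proof
      assume "sqlt R r a b"
      then obtain A n m where A: "A \<in> R" "n < m" "a = r A n" "b = r A m" unfolding sqlt_def by blast
      then have "fh (r A n) = {}" using ab(2) unfolding F_def by blast
      then show False using ab(1) A unfolding F_def by blast
    qed
  qed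
  have second: "\<forall>Y\<in>V. \<exists>X\<in>C. f ` restr r lefin F X \<subseteq> Y"
  proof
    fix Y assume "Y \<in> V"
    then obtain X1 where X1: "X1 \<in> C" "\<forall>W\<in>C. le W X1 \<longrightarrow> f' W \<subseteq> Y" using f'P by blast
    obtain X where X: "X \<in> C" "le X X1" "le X X0" using Cdir X1 X0 by blast
    have "f ` restr r lefin F X \<subseteq> Y"
    proof
      fix y assume "y \<in> f ` restr r lefin F X"
      then obtain a n where a: "a \<in> F" "lefin a (r X n)" "y = f a"
        unfolding restr_def lefinR_def by blast
      have "fh a \<noteq> {}" using a unfolding F_def by blast
      then have "f a \<in> fh a" unfolding f_def by (meson LeastI ex_in_conv)
      moreover have "fh a \<subseteq> fh (r X n)"
      proof -
        have "a \<in> AR R r" using a unfolding F_def by blast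
        moreover have "r X n \<in> AR R r" using ARI X CR by blast
        ultimately show ?thesis using fhlef a by blast
      qed
      moreover have "fh (r X n) \<subseteq> f' X" using fheq X by blast
      moreover have "f' X \<subseteq> Y" using X1 X by blast
      ultimately show "y \<in> Y" using a by blast
    qed
    then show "\<exists>X\<in>C. f ` restr r lefin F X \<subseteq> Y" using X by blast
  qed
  have third: "V = image_filter F f (gen_filter r lefin C F)"
    if U: "ultrafilter_on F (gen_filter r lefin C F)"
  proof -
    let ?U = "gen_filter r lefin C F"
    have Uint: "\<And>Z W. Z \<in> ?U \<Longrightarrow> W \<in> ?U \<Longrightarrow> Z \<inter> W \<in> ?U" and Uemp: "{} \<notin> ?U"
      using U unfolding ultrafilter_on_def by blast+
    show ?thesis
    proof (intro set_eqI iffI)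
      fix Y assume "Y \<in> V"
      then obtain X where X: "X \<in> C" "f ` restr r lefin F X \<subseteq> Y" using second by blast
      have "restr r lefin F X \<subseteq> {a \<in> F. f a \<in> Y}" using X unfolding restr_def by blast
      then show "Y \<in> image_filter F f ?U" using X unfolding image_filter_def gen_filter_def by blast
    next
      fix Y assume Y: "Y \<in> image_filter F f ?U"
      show "Y \<in> V"
      proof (rule ccontr)
        assume "Y \<notin> V"
        then have "UNIV - Y \<in> V" by (rule Vcomp)
        then have "UNIV - Y \<in> image_filter F f ?U" using \<open>UNIV - Y \<in> V\<close>
        proof -
          obtain X where X: "X \<in> C" "f ` restr r lefin F X \<subseteq> UNIV - Y" using second \<open>UNIV - Y \<in> V\<close> by blast
          have "restr r lefin F X \<subseteq> {a \<in> F. f a \<in> UNIV - Y}" using X unfolding restr_def by blast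
          then show ?thesis using X unfolding image_filter_def gen_filter_def by blast
        qed
        then have "{a \<in> F. f a \<in> Y} \<inter> {a \<in> F. f a \<in> UNIV - Y} \<in> ?U"
          using Y Uint unfolding image_filter_def by blast
        moreover have "{a \<in> F. f a \<in> Y} \<inter> {a \<in> F. f a \<in> UNIV - Y} = {}" by blast
        ultimately show False using Uemp by simp
      qed
    qed
  qed
  show ?thesis using front second third by blast
qed

end
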